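(* Let $V=\{0,1,\dots,20\}$ and let $H_1=(V,E_1)$, $H_2=(V,E_2)$, $H_3=(V,E_3)$, $H_4=(V,E_4)$, where $E_1=\{\{0,1,2\},\{0,3,4\},\{1,5,6\},\{0,7,8\},\{2,9,10\},\{1,11,12\},\{9,13,14\},\{16,3,15\},\{17,18,7\},\{19,20,13\}\}$, $E_2=\{\{0,1,2\},\{0,3,4\},\{1,5,6\},\{0,7,8\},\{2,9,10\},\{1,11,12\},\{9,13,14\},\{16,3,15\},\{17,18,5\},\{19,20,15\}\}$, $E_3=\{\{0,1,2\},\{0,3,4\},\{1,5,6\},\{0,7,8\},\{5,9,10\},\{5,11,12\},\{0,13,14\},\{16,2,15\},\{1,17,18\},\{19,20,15\}\}$, $E_4=\{\{0,1,2\},\{0,3,4\},\{1,5,6\},\{0,7,8\},\{2,9,10\},\{1,11,12\},\{0,13,14\},\{16,9,15\},\{17,18,9\},\{3,19,20\}\}$. Then $H_1,H_2,H_3,H_4$ are $3$-uniform hypertrees, $H_1$ is not isomorphic to $H_2$, $H_3$ is not isomorphic to $H_4$, and $X_{H_1}=X_{H_2}$ and $X_{H_3}=X_{H_4}$. In particular, the chromatic symmetric function does not distinguish $3$-uniform hypertrees up to isomorphism.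
   Context: A hypergraph $(V,E)$ has $E$ a set of subsets of $V$; it is $3$-uniform if every hyperedge has $3$ elements. A hypertree is a connected hypergraph with no cycle, where a cycle is a sequence $(v_1,e_1,\dots,v_\ell,e_\ell,v_{\ell+1})$ with $\ell\ge2$, $v_i,v_{i+1}\in e_i\in E$, all vertices and hyperedges distinct except $v_1=v_{\ell+1}$, and connectivity is via such sequences with all entries distinct. Two hypergraphs are isomorphic if there is a bijection of vertex sets inducing a bijection of hyperedge sets. The chromatic symmetric function is $X_H=\sum_f\prod_{v\in V}x_{f(v)}$ in commuting variables, summed over all $f:V\to\{1,2,\dots\}$ with no monochromatic hyperedge. *)

theory Defs
  imports Main "HOL-Library.FuncSet"
begin

definition is_hypergraph :: "'a set \<Rightarrow> 'a set set \<Rightarrow> bool" where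
  "is_hypergraph V E \<longleftrightarrow> (\<forall>e\<in>E. e \<subseteq> V)"

definition uniform3 :: "'a set set \<Rightarrow> bool" where
  "uniform3 E \<longleftrightarrow> (\<forall>e\<in>E. card e = 3)"

text \<open>An alternating sequence (v_1, e_1, ..., v_l, e_l, v_{l+1}) represented by the list
  vs = [v_1,...,v_{l+1}] and es = [e_1,...,e_l], with v_i, v_{i+1} in e_i in E.\<close>
definition hwalk :: "'a set \<Rightarrow> 'a set set \<Rightarrow> 'a list \<Rightarrow> 'a set list \<Rightarrow> bool" where
  "hwalk V E vs es \<longleftrightarrow> length vs = Suc (length es) \<and> set vs \<subseteq> V \<and>
     (\<forall>i<length es. es ! i \<in> E \<and> vs ! i \<in> es ! i \<and> vs ! Suc i \<in> es ! i)"

definition hcycle :: "'a set \<Rightarrow> 'a set set \<Rightarrow> 'a list \<Rightarrow> 'a set list \<Rightarrow> bool" where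
  "hcycle V E vs es \<longleftrightarrow> hwalk V E vs es \<and> length es \<ge> 2 \<and>
     distinct es \<and> distinct (butlast vs) \<and> hd vs = last vs"

definition hpath :: "'a set \<Rightarrow> 'a set set \<Rightarrow> 'a list \<Rightarrow> 'a set list \<Rightarrow> bool" where
  "hpath V E vs es \<longleftrightarrow> hwalk V E vs es \<and> distinct es \<and> distinct vs"

definition hconnected :: "'a set \<Rightarrow> 'a set set \<Rightarrow> bool" where
  "hconnected V E \<longleftrightarrow> (\<forall>u\<in>V. \<forall>v\<in>V. u \<noteq> v \<longrightarrow>
     (\<exists>vs es. hpath V E vs es \<and> hd vs = u \<and> last vs = v))"

definition hypertree :: "'a set \<Rightarrow> 'a set set \<Rightarrow> bool" where
  "hypertree V E \<longleftrightarrow> is_hypergraph V E \<and> hconnected V E \<and> \<not> (\<exists>vs es. hcycle V E vs es)"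

definition hyp_isomorphic :: "'a set \<Rightarrow> 'a set set \<Rightarrow> 'b set \<Rightarrow> 'b set set \<Rightarrow> bool" where
  "hyp_isomorphic V1 E1 V2 E2 \<longleftrightarrow>
     (\<exists>\<sigma>. bij_betw \<sigma> V1 V2 \<and> bij_betw (\<lambda>e. \<sigma> ` e) E1 E2)"

definition proper_colorings :: "'a set \<Rightarrow> 'a set set \<Rightarrow> ('a \<Rightarrow> nat) set" where
  "proper_colorings V E = {f \<in> V \<rightarrow>\<^sub>E {1..}. \<forall>e\<in>E. \<not> (\<exists>c. \<forall>v\<in>e. f v = c)}"

text \<open>The chromatic symmetric function X_H, represented as a formal power series in the
  commuting variables x_1, x_2, ...: it maps each exponent vector \<alpha> (monomial
  \<Prod>i x_i^{\<alpha> i}) to its coefficient, the number of proper colourings f with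
  \<Prod>v x_{f v} equal to that monomial.\<close>
definition chrom_symfun :: "'a set \<Rightarrow> 'a set set \<Rightarrow> (nat \<Rightarrow> nat) \<Rightarrow> nat" where
  "chrom_symfun V E = (\<lambda>\<alpha>. card {f \<in> proper_colorings V E. \<forall>i. card {v \<in> V. f v = i} = \<alpha> i})"

definition V21 :: "nat set" where "V21 = {0..20}"

definition E1 :: "nat set set" where
  "E1 = {{0,1,2},{0,3,4},{1,5,6},{0,7,8},{2,9,10},{1,11,12},{9,13,14},{16,3,15},{17,18,7},{19,20,13}}"
definition E2 :: "nat set set" where
  "E2 = {{0,1,2},{0,3,4},{1,5,6},{0,7,8},{2,9,10},{1,11,12},{9,13,14},{16,3,15},{17,18,5},{19,20,15}}"
definition E3 :: "nat set set" where
  "E3 = {{0,1,2},{0,3,4},{1,5,6},{0,7,8},{5,9,10},{5,11,12},{0,13,14},{16,2,15},{1,17,18},{19,20,15}}"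
definition E4 :: "nat set set" where
  "E4 = {{0,1,2},{0,3,4},{1,5,6},{0,7,8},{2,9,10},{1,11,12},{0,13,14},{16,9,15},{17,18,9},{3,19,20}}"

end

theory Submission
  imports Defs
begin


lemma hwalk_mono: "hwalk V E vs es \<Longrightarrow> E \<subseteq> E' \<Longrightarrow> hwalk V E' vs es"
  unfolding hwalk_def by blast

lemma hwalk_set: assumes "hwalk V E vs es" "es \<noteq> []" shows "set vs \<subseteq> \<Union>E"
proof
  fix w assume "w \<in> set vs"
  then obtain k where k: "k < length vs" "vs ! k = w" by (auto simp: in_set_conv_nth)
  show "w \<in> \<Union>E"
  proof (cases "k < length es")
    case True thus ?thesis using assms k unfolding hwalk_def by blast
  next
    case False
    have kk: "k = length es" using k False assms(1) unfolding hwalk_def by auto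
    have "length es \<noteq> 0" using assms(2) by simp
    then have "k = Suc (k - 1)" "k - 1 < length es" using kk by auto
    thus ?thesis using assms k unfolding hwalk_def by (metis UnionI)
  qed
qed

lemma hpath_append:
  assumes "hpath V E vs es" "last vs \<in> e" "a \<in> e" "a \<in> V" "a \<notin> set vs" "e \<notin> set es" "e \<in> E"
  shows "hpath V E (vs @ [a]) (es @ [e])"
proof -
  have L: "length vs = Suc (length es)" using assms(1) unfolding hpath_def hwalk_def by auto
  have lv: "last vs = vs ! length es" using L by (metis diff_Suc_1 last_conv_nth list.size(3) nat.distinct(1))
  have "\<forall>i<length (es @ [e]). (es @ [e]) ! i \<in> E \<and> (vs @ [a]) ! i \<in> (es @ [e]) ! i \<and> (vs @ [a]) ! Suc i \<in> (es @ [e]) ! i"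
  proof (intro allI impI)
    fix i assume "i < length (es @ [e])"
    then consider "i < length es" | "i = length es" by fastforce
    thus "(es @ [e]) ! i \<in> E \<and> (vs @ [a]) ! i \<in> (es @ [e]) ! i \<and> (vs @ [a]) ! Suc i \<in> (es @ [e]) ! i"
    proof cases
      case 1 thus ?thesis using assms(1) L unfolding hpath_def hwalk_def by (auto simp: nth_append)
    next
      case 2 thus ?thesis using assms L lv by (auto simp: nth_append)
    qed
  qed
  thus ?thesis using assms L unfolding hpath_def hwalk_def by auto
qed

lemma hpath_prepend:
  assumes "hpath V E vs es" "hd vs \<in> e" "a \<in> e" "a \<in> V" "a \<notin> set vs" "e \<notin> set es" "e \<in> E"
  shows "hpath V E (a # vs) (e # es)"
proof -
  have L: "length vs = Suc (length es)" using assms(1) unfolding hpath_def hwalk_def by auto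
  have hv: "hd vs = vs ! 0" using L by (metis hd_conv_nth list.size(3) nat.distinct(1))
  have "\<forall>i<length (e # es). (e # es) ! i \<in> E \<and> (a # vs) ! i \<in> (e # es) ! i \<and> (a # vs) ! Suc i \<in> (e # es) ! i"
  proof (intro allI impI)
    fix i assume "i < length (e # es)"
    thus "(e # es) ! i \<in> E \<and> (a # vs) ! i \<in> (e # es) ! i \<and> (a # vs) ! Suc i \<in> (e # es) ! i"
    proof (cases i)
      case 0 thus ?thesis using assms hv by auto
    next
      case (Suc j) thus ?thesis using assms(1) L \<open>i < _\<close> unfolding hpath_def hwalk_def by auto
    qed
  qed
  thus ?thesis using assms L unfolding hpath_def hwalk_def by auto
qed

definition nocyc :: "'a set \<Rightarrow> 'a set set \<Rightarrow> bool" where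
  "nocyc V E \<longleftrightarrow> \<not> (\<exists>vs es. hcycle V E vs es)"

lemma nocyc_empty: "nocyc V {}"
  unfolding nocyc_def hcycle_def hwalk_def
proof (clarify)
  fix vs es assume "2 \<le> length es" "\<forall>i<length es. es ! i \<in> {} \<and> vs ! i \<in> es ! i \<and> vs ! Suc i \<in> es ! i"
  thus False by (metis empty_iff gr0I not_numeral_le_zero)
qed

lemma nocyc_step:
  assumes nc: "nocyc V E" and a: "a \<notin> \<Union>E" and b: "b \<notin> \<Union>E"
  shows "nocyc V (insert {x,a,b} E)"
  unfolding nocyc_def
proof
  assume "\<exists>vs es. hcycle V (insert {x,a,b} E) vs es"
  then obtain vs es where c: "hcycle V (insert {x,a,b} E) vs es" by blast
  define e where "e = {x,a,b}"
  define l where "l = length es"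
  have L: "length vs = Suc l" and l2: "l \<ge> 2" and de: "distinct es" and dv: "distinct (butlast vs)"
    and hl: "hd vs = last vs" and sv: "set vs \<subseteq> V"
    and st: "\<And>i. i < l \<Longrightarrow> es ! i \<in> insert e E \<and> vs ! i \<in> es ! i \<and> vs ! Suc i \<in> es ! i"
    using c unfolding hcycle_def hwalk_def l_def e_def by auto
  have bl: "\<And>i. i < l \<Longrightarrow> butlast vs ! i = vs ! i" using L by (simp add: nth_butlast)
  have lbl: "length (butlast vs) = l" using L by simp
  have v0: "vs ! l = vs ! 0"
  proof -
    have "vs \<noteq> []" using L by auto
    hence "hd vs = vs ! 0" "last vs = vs ! (length vs - 1)" by (simp_all add: hd_conv_nth last_conv_nth)
    thus ?thesis using hl L by simp
  qed
  have dvi: "\<And>i j. i < l \<Longrightarrow> j < l \<Longrightarrow> vs ! i = vs ! j \<Longrightarrow> i = j"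
  proof -
    fix i j assume ij: "i < l" "j < l" "vs ! i = vs ! j"
    hence "butlast vs ! i = butlast vs ! j" using bl by simp
    thus "i = j" using nth_eq_iff_index_eq[OF dv] ij lbl by simp
  qed
  have dei: "\<And>i j. i < l \<Longrightarrow> j < l \<Longrightarrow> es ! i = es ! j \<Longrightarrow> i = j"
    using nth_eq_iff_index_eq[OF de] l_def by simp
  show False
  proof (cases "e \<in> set es")
    case False
    have "\<And>i. i < l \<Longrightarrow> es ! i \<in> E"
    proof -
      fix i assume i: "i < l"
      hence "es ! i \<in> set es" unfolding l_def by simp
      hence "es ! i \<noteq> e" using False by metis
      thus "es ! i \<in> E" using st[OF i] by simp
    qed
    hence "hcycle V E vs es"
      using c st unfolding hcycle_def hwalk_def l_def by simp
    thus False using nc unfolding nocyc_def by blast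
  next
    case True
    then obtain i where i: "i < l" "es ! i = e" unfolding l_def by (auto simp: in_set_conv_nth)
    have other: "\<And>j. j < l \<Longrightarrow> j \<noteq> i \<Longrightarrow> es ! j \<in> E"
    proof -
      fix j assume j: "j < l" "j \<noteq> i"
      hence "es ! j \<noteq> e" using dei i by metis
      thus "es ! j \<in> E" using st[OF j(1)] by simp
    qed
    have ne: "vs ! i \<noteq> vs ! Suc i"
    proof (cases "Suc i < l")
      case True thus ?thesis using dvi[of i "Suc i"] i by auto
    next
      case False
      hence "Suc i = l" using i by simp
      hence "vs ! Suc i = vs ! 0" "i \<noteq> 0" using v0 l2 by auto
      thus ?thesis using dvi[of i 0] i l2 by auto
    qed
    have ab: "\<And>w. w \<in> e \<Longrightarrow> w \<noteq> x \<Longrightarrow> w \<notin> \<Union>E" using a b unfolding e_def by auto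
    show False
    proof (cases "vs ! Suc i = x")
      case True
      hence w: "vs ! i \<noteq> x" using ne by simp
      have "vs ! i \<in> e" using st[OF i(1)] i(2) by simp
      hence nw: "vs ! i \<notin> \<Union>E" using ab w by blast
      show False
      proof (cases i)
        case 0
        have "vs ! 0 = vs ! Suc (l - 1)" using v0 l2 by simp
        moreover have "l - 1 < l" "l - 1 \<noteq> i" using l2 0 by auto
        ultimately have "vs ! i \<in> es ! (l - 1)" "es ! (l-1) \<in> E" using st[of "l-1"] other[of "l-1"] 0 by auto
        thus False using nw by blast
      next
        case (Suc j)
        have "j < l" "j \<noteq> i" using i Suc by auto
        hence "vs ! i \<in> es ! j" "es ! j \<in> E" using st[of j] other[of j] Suc by auto
        thus False using nw by blast
      qed
    next
      case False
      have "vs ! Suc i \<in> e" using st[OF i(1)] i(2) by simp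
      hence nw: "vs ! Suc i \<notin> \<Union>E" using ab False by blast
      show False
      proof (cases "Suc i < l")
        case True
        hence "vs ! Suc i \<in> es ! Suc i" "es ! Suc i \<in> E" using st[of "Suc i"] other[of "Suc i"] by auto
        thus False using nw by blast
      next
        case F: False
        hence "Suc i = l" "i \<noteq> 0" using i l2 by auto
        hence "vs ! Suc i = vs ! 0" using v0 by simp
        hence "vs ! Suc i \<in> es ! 0" "es ! 0 \<in> E" using st[of 0] other[of 0] \<open>i \<noteq> 0\<close> l2 by auto
        thus False using nw by blast
      qed
    qed
  qed
qed


definition conn :: "'a set \<Rightarrow> 'a set \<Rightarrow> 'a set set \<Rightarrow> bool" where
  "conn V W E \<longleftrightarrow> (\<forall>u\<in>W. \<forall>v\<in>W. u \<noteq> v \<longrightarrow> (\<exists>vs es. hpath V E vs es \<and> hd vs = u \<and> last vs = v))"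

definition TL :: "'a set \<Rightarrow> 'a set \<Rightarrow> 'a set set \<Rightarrow> bool" where
  "TL V W E \<longleftrightarrow> conn V W E \<and> nocyc V E \<and> \<Union>E \<subseteq> W \<and> W \<subseteq> V"

lemma TL_base: "x \<in> V \<Longrightarrow> TL V {x} {}"
  unfolding TL_def conn_def using nocyc_empty by auto

lemma hpath_edge: "u \<in> V \<Longrightarrow> v \<in> V \<Longrightarrow> u \<noteq> v \<Longrightarrow> u \<in> e \<Longrightarrow> v \<in> e \<Longrightarrow> e \<in> E \<Longrightarrow>
  hpath V E [u, v] [e] \<and> hd [u,v] = u \<and> last [u,v] = v"
  unfolding hpath_def hwalk_def by auto

lemma TL_step:
  assumes T: "TL V W E" and x: "x \<in> W" and aV: "a \<in> V" and bV: "b \<in> V"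
    and aW: "a \<notin> W" and bW: "b \<notin> W" and ab: "a \<noteq> b"
  shows "TL V (insert a (insert b W)) (insert {x,a,b} E)"
proof -
  define e where "e = {x,a,b}"
  have C: "conn V W E" and N: "nocyc V E" and U: "\<Union>E \<subseteq> W" and WV: "W \<subseteq> V"
    using T unfolding TL_def by auto
  have aE: "a \<notin> \<Union>E" and bE: "b \<notin> \<Union>E" using U aW bW by auto
  have eE: "e \<notin> E" using aE unfolding e_def by blast
  have xV: "x \<in> V" using x WV by auto
  have N': "nocyc V (insert e E)" using nocyc_step[OF N aE bE] unfolding e_def .
  have old: "\<And>u v. u \<in> W \<Longrightarrow> v \<in> W \<Longrightarrow> u \<noteq> v \<Longrightarrow> \<exists>vs es. hpath V E vs es \<and> hd vs = u \<and> last vs = v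
      \<and> es \<noteq> [] \<and> set vs \<subseteq> W \<and> e \<notin> set es"
  proof -
    fix u v assume uv: "u \<in> W" "v \<in> W" "u \<noteq> v"
    then obtain vs es where p: "hpath V E vs es" "hd vs = u" "last vs = v" using C unfolding conn_def by blast
    have ne: "es \<noteq> []"
    proof
      assume "es = []"
      hence "length vs = 1" using p unfolding hpath_def hwalk_def by simp
      hence "hd vs = last vs" by (cases vs) auto
      thus False using p uv by simp
    qed
    have "set vs \<subseteq> W" using hwalk_set[of V E vs es] p ne U unfolding hpath_def by blast
    moreover have "e \<notin> set es" using p eE unfolding hpath_def hwalk_def by (metis in_set_conv_nth)
    ultimately show "\<exists>vs es. hpath V E vs es \<and> hd vs = u \<and> last vs = v
      \<and> es \<noteq> [] \<and> set vs \<subseteq> W \<and> e \<notin> set es" using p ne by blast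
  qed
  have lift: "\<And>vs es. hpath V E vs es \<Longrightarrow> hpath V (insert e E) vs es"
    unfolding hpath_def using hwalk_mono by blast
  have new: "\<And>w. w \<in> {a,b} \<Longrightarrow> w \<in> e \<and> w \<in> V \<and> w \<notin> W" using aV bV aW bW unfolding e_def by auto
  have xe: "x \<in> e" unfolding e_def by simp
  have "conn V (insert a (insert b W)) (insert e E)"
    unfolding conn_def
  proof (intro ballI impI)
    fix u v assume u: "u \<in> insert a (insert b W)" and v: "v \<in> insert a (insert b W)" and uv: "u \<noteq> v"
    show "\<exists>vs es. hpath V (insert e E) vs es \<and> hd vs = u \<and> last vs = v"
    proof (cases "u \<in> W")
      case uW: True
      show ?thesis
      proof (cases "v \<in> W")
        case True thus ?thesis using old[OF uW True uv] lift by blast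
      next
        case vn: False
        hence vab: "v \<in> {a,b}" using v by auto
        show ?thesis
        proof (cases "u = x")
          case True thus ?thesis using hpath_edge[of u V v e "insert e E"] new[OF vab] xe xV uv by auto
        next
          case False
          then obtain vs es where p: "hpath V E vs es" "hd vs = u" "last vs = x" "set vs \<subseteq> W" "e \<notin> set es"
            using old[OF uW x] by blast
          have "hpath V (insert e E) (vs @ [v]) (es @ [e])"
            using hpath_append[OF lift[OF p(1)]] p new[OF vab] xe by auto
          moreover have "hd (vs @ [v]) = u" using p(1,2) unfolding hpath_def hwalk_def
            by (metis Zero_not_Suc append_Nil hd_append list.size(3))
          ultimately show ?thesis by fastforce
        qed
      qed
    next
      case un: False
      hence uab: "u \<in> {a,b}" using u by auto
      show ?thesis
      proof (cases "v \<in> W")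
        case vW: True
        show ?thesis
        proof (cases "v = x")
          case True thus ?thesis using hpath_edge[of u V v e "insert e E"] new[OF uab] xe xV uv by auto
        next
          case False
          then obtain vs es where p: "hpath V E vs es" "hd vs = x" "last vs = v" "set vs \<subseteq> W" "e \<notin> set es"
            using old[OF x vW] by metis
          have "hpath V (insert e E) (u # vs) (e # es)"
            using hpath_prepend[OF lift[OF p(1)]] p new[OF uab] xe by auto
          moreover have "last (u # vs) = v" using p(1,3) unfolding hpath_def hwalk_def
            by (metis Zero_not_Suc last_ConsR list.size(3))
          ultimately show ?thesis by fastforce
        qed
      next
        case False
        hence vab: "v \<in> {a,b}" using v by auto
        thus ?thesis using hpath_edge[of u V v e "insert e E"] new[OF vab] new[OF uab] uv by auto
      qed
    qed
  qed
  moreover have "\<Union>(insert e E) \<subseteq> insert a (insert b W)" using U x unfolding e_def by auto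
  moreover have "insert a (insert b W) \<subseteq> V" using WV aV bV by auto
  ultimately show ?thesis using N' unfolding TL_def e_def by blast
qed

lemma TL_hypertree: "TL V V E \<Longrightarrow> hypertree V E"
  unfolding TL_def hypertree_def is_hypergraph_def conn_def hconnected_def nocyc_def by blast

lemma TL_step2: "TL V W E \<Longrightarrow> x \<in> W \<Longrightarrow> a \<in> V \<Longrightarrow> b \<in> V \<Longrightarrow> a \<notin> W \<Longrightarrow> b \<notin> W \<Longrightarrow> a \<noteq> b \<Longrightarrow>
  TL V (insert a (insert b W)) (insert {a,x,b} E)"
  using TL_step[of V W E x a b] by (simp add: insert_commute)

lemma TL_step3: "TL V W E \<Longrightarrow> x \<in> W \<Longrightarrow> a \<in> V \<Longrightarrow> b \<in> V \<Longrightarrow> a \<notin> W \<Longrightarrow> b \<notin> W \<Longrightarrow> a \<noteq> b \<Longrightarrow>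
  TL V (insert a (insert b W)) (insert {a,b,x} E)"
  using TL_step[of V W E x a b] by (simp add: insert_commute)

lemma V21_lit: "V21 = {0,1,2,3,4,5,6,7,8,9,10,11,12,13,14,15,16,17,18,19,20}"
  unfolding V21_def by (simp add: atLeast0AtMost atMost_Suc numeral_eq_Suc) auto

lemma TL_E1: "TL V21 V21 E1"
proof -
  have "TL V21 {0} {}" by (rule TL_base) (simp add: V21_lit)
  then have "TL V21 (insert 1 (insert 2 {0})) (insert {0,1,2} {})" by (rule TL_step) (simp_all add: V21_lit)
  then have "TL V21 (insert 3 (insert 4 (insert 1 (insert 2 {0})))) (insert {0,3,4} (insert {0,1,2} {}))" by (rule TL_step) (simp_all add: V21_lit)
  then have "TL V21 (insert 5 (insert 6 (insert 3 (insert 4 (insert 1 (insert 2 {0})))))) (insert {1,5,6} (insert {0,3,4} (insert {0,1,2} {})))" by (rule TL_step) (simp_all add: V21_lit)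
  then have "TL V21 (insert 7 (insert 8 (insert 5 (insert 6 (insert 3 (insert 4 (insert 1 (insert 2 {0})))))))) (insert {0,7,8} (insert {1,5,6} (insert {0,3,4} (insert {0,1,2} {}))))" by (rule TL_step) (simp_all add: V21_lit)
  then have "TL V21 (insert 9 (insert 10 (insert 7 (insert 8 (insert 5 (insert 6 (insert 3 (insert 4 (insert 1 (insert 2 {0})))))))))) (insert {2,9,10} (insert {0,7,8} (insert {1,5,6} (insert {0,3,4} (insert {0,1,2} {})))))" by (rule TL_step) (simp_all add: V21_lit)
  then have "TL V21 (insert 11 (insert 12 (insert 9 (insert 10 (insert 7 (insert 8 (insert 5 (insert 6 (insert 3 (insert 4 (insert 1 (insert 2 {0})))))))))))) (insert {1,11,12} (insert {2,9,10} (insert {0,7,8} (insert {1,5,6} (insert {0,3,4} (insert {0,1,2} {}))))))" by (rule TL_step) (simp_all add: V21_lit)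
  then have "TL V21 (insert 13 (insert 14 (insert 11 (insert 12 (insert 9 (insert 10 (insert 7 (insert 8 (insert 5 (insert 6 (insert 3 (insert 4 (insert 1 (insert 2 {0})))))))))))))) (insert {9,13,14} (insert {1,11,12} (insert {2,9,10} (insert {0,7,8} (insert {1,5,6} (insert {0,3,4} (insert {0,1,2} {})))))))" by (rule TL_step) (simp_all add: V21_lit)
  then have "TL V21 (insert 16 (insert 15 (insert 13 (insert 14 (insert 11 (insert 12 (insert 9 (insert 10 (insert 7 (insert 8 (insert 5 (insert 6 (insert 3 (insert 4 (insert 1 (insert 2 {0})))))))))))))))) (insert {16,3,15} (insert {9,13,14} (insert {1,11,12} (insert {2,9,10} (insert {0,7,8} (insert {1,5,6} (insert {0,3,4} (insert {0,1,2} {}))))))))" by (rule TL_step2) (simp_all add: V21_lit)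
  then have "TL V21 (insert 17 (insert 18 (insert 16 (insert 15 (insert 13 (insert 14 (insert 11 (insert 12 (insert 9 (insert 10 (insert 7 (insert 8 (insert 5 (insert 6 (insert 3 (insert 4 (insert 1 (insert 2 {0})))))))))))))))))) (insert {17,18,7} (insert {16,3,15} (insert {9,13,14} (insert {1,11,12} (insert {2,9,10} (insert {0,7,8} (insert {1,5,6} (insert {0,3,4} (insert {0,1,2} {})))))))))" by (rule TL_step3) (simp_all add: V21_lit)
  then have "TL V21 (insert 19 (insert 20 (insert 17 (insert 18 (insert 16 (insert 15 (insert 13 (insert 14 (insert 11 (insert 12 (insert 9 (insert 10 (insert 7 (insert 8 (insert 5 (insert 6 (insert 3 (insert 4 (insert 1 (insert 2 {0})))))))))))))))))))) (insert {19,20,13} (insert {17,18,7} (insert {16,3,15} (insert {9,13,14} (insert {1,11,12} (insert {2,9,10} (insert {0,7,8} (insert {1,5,6} (insert {0,3,4} (insert {0,1,2} {}))))))))))" by (rule TL_step3) (simp_all add: V21_lit)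
  moreover have "(insert 19 (insert 20 (insert 17 (insert 18 (insert 16 (insert 15 (insert 13 (insert 14 (insert 11 (insert 12 (insert 9 (insert 10 (insert 7 (insert 8 (insert 5 (insert 6 (insert 3 (insert 4 (insert 1 (insert 2 {0})))))))))))))))))))) = V21" unfolding V21_lit by auto
  moreover have "(insert {19,20,13} (insert {17,18,7} (insert {16,3,15} (insert {9,13,14} (insert {1,11,12} (insert {2,9,10} (insert {0,7,8} (insert {1,5,6} (insert {0,3,4} (insert {0,1,2} {})))))))))) = E1" unfolding E1_def by auto
  ultimately show ?thesis by simp
qed

lemma TL_E2: "TL V21 V21 E2"
proof -
  have "TL V21 {0} {}" by (rule TL_base) (simp add: V21_lit)
  then have "TL V21 (insert 1 (insert 2 {0})) (insert {0,1,2} {})" by (rule TL_step) (simp_all add: V21_lit)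
  then have "TL V21 (insert 3 (insert 4 (insert 1 (insert 2 {0})))) (insert {0,3,4} (insert {0,1,2} {}))" by (rule TL_step) (simp_all add: V21_lit)
  then have "TL V21 (insert 5 (insert 6 (insert 3 (insert 4 (insert 1 (insert 2 {0})))))) (insert {1,5,6} (insert {0,3,4} (insert {0,1,2} {})))" by (rule TL_step) (simp_all add: V21_lit)
  then have "TL V21 (insert 7 (insert 8 (insert 5 (insert 6 (insert 3 (insert 4 (insert 1 (insert 2 {0})))))))) (insert {0,7,8} (insert {1,5,6} (insert {0,3,4} (insert {0,1,2} {}))))" by (rule TL_step) (simp_all add: V21_lit)
  then have "TL V21 (insert 9 (insert 10 (insert 7 (insert 8 (insert 5 (insert 6 (insert 3 (insert 4 (insert 1 (insert 2 {0})))))))))) (insert {2,9,10} (insert {0,7,8} (insert {1,5,6} (insert {0,3,4} (insert {0,1,2} {})))))" by (rule TL_step) (simp_all add: V21_lit)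
  then have "TL V21 (insert 11 (insert 12 (insert 9 (insert 10 (insert 7 (insert 8 (insert 5 (insert 6 (insert 3 (insert 4 (insert 1 (insert 2 {0})))))))))))) (insert {1,11,12} (insert {2,9,10} (insert {0,7,8} (insert {1,5,6} (insert {0,3,4} (insert {0,1,2} {}))))))" by (rule TL_step) (simp_all add: V21_lit)
  then have "TL V21 (insert 13 (insert 14 (insert 11 (insert 12 (insert 9 (insert 10 (insert 7 (insert 8 (insert 5 (insert 6 (insert 3 (insert 4 (insert 1 (insert 2 {0})))))))))))))) (insert {9,13,14} (insert {1,11,12} (insert {2,9,10} (insert {0,7,8} (insert {1,5,6} (insert {0,3,4} (insert {0,1,2} {})))))))" by (rule TL_step) (simp_all add: V21_lit)
  then have "TL V21 (insert 16 (insert 15 (insert 13 (insert 14 (insert 11 (insert 12 (insert 9 (insert 10 (insert 7 (insert 8 (insert 5 (insert 6 (insert 3 (insert 4 (insert 1 (insert 2 {0})))))))))))))))) (insert {16,3,15} (insert {9,13,14} (insert {1,11,12} (insert {2,9,10} (insert {0,7,8} (insert {1,5,6} (insert {0,3,4} (insert {0,1,2} {}))))))))" by (rule TL_step2) (simp_all add: V21_lit)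
  then have "TL V21 (insert 17 (insert 18 (insert 16 (insert 15 (insert 13 (insert 14 (insert 11 (insert 12 (insert 9 (insert 10 (insert 7 (insert 8 (insert 5 (insert 6 (insert 3 (insert 4 (insert 1 (insert 2 {0})))))))))))))))))) (insert {17,18,5} (insert {16,3,15} (insert {9,13,14} (insert {1,11,12} (insert {2,9,10} (insert {0,7,8} (insert {1,5,6} (insert {0,3,4} (insert {0,1,2} {})))))))))" by (rule TL_step3) (simp_all add: V21_lit)
  then have "TL V21 (insert 19 (insert 20 (insert 17 (insert 18 (insert 16 (insert 15 (insert 13 (insert 14 (insert 11 (insert 12 (insert 9 (insert 10 (insert 7 (insert 8 (insert 5 (insert 6 (insert 3 (insert 4 (insert 1 (insert 2 {0})))))))))))))))))))) (insert {19,20,15} (insert {17,18,5} (insert {16,3,15} (insert {9,13,14} (insert {1,11,12} (insert {2,9,10} (insert {0,7,8} (insert {1,5,6} (insert {0,3,4} (insert {0,1,2} {}))))))))))" by (rule TL_step3) (simp_all add: V21_lit)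
  moreover have "(insert 19 (insert 20 (insert 17 (insert 18 (insert 16 (insert 15 (insert 13 (insert 14 (insert 11 (insert 12 (insert 9 (insert 10 (insert 7 (insert 8 (insert 5 (insert 6 (insert 3 (insert 4 (insert 1 (insert 2 {0})))))))))))))))))))) = V21" unfolding V21_lit by auto
  moreover have "(insert {19,20,15} (insert {17,18,5} (insert {16,3,15} (insert {9,13,14} (insert {1,11,12} (insert {2,9,10} (insert {0,7,8} (insert {1,5,6} (insert {0,3,4} (insert {0,1,2} {})))))))))) = E2" unfolding E2_def by auto
  ultimately show ?thesis by simp
qed

lemma TL_E3: "TL V21 V21 E3"
proof -
  have "TL V21 {0} {}" by (rule TL_base) (simp add: V21_lit)
  then have "TL V21 (insert 1 (insert 2 {0})) (insert {0,1,2} {})" by (rule TL_step) (simp_all add: V21_lit)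
  then have "TL V21 (insert 3 (insert 4 (insert 1 (insert 2 {0})))) (insert {0,3,4} (insert {0,1,2} {}))" by (rule TL_step) (simp_all add: V21_lit)
  then have "TL V21 (insert 5 (insert 6 (insert 3 (insert 4 (insert 1 (insert 2 {0})))))) (insert {1,5,6} (insert {0,3,4} (insert {0,1,2} {})))" by (rule TL_step) (simp_all add: V21_lit)
  then have "TL V21 (insert 7 (insert 8 (insert 5 (insert 6 (insert 3 (insert 4 (insert 1 (insert 2 {0})))))))) (insert {0,7,8} (insert {1,5,6} (insert {0,3,4} (insert {0,1,2} {}))))" by (rule TL_step) (simp_all add: V21_lit)
  then have "TL V21 (insert 9 (insert 10 (insert 7 (insert 8 (insert 5 (insert 6 (insert 3 (insert 4 (insert 1 (insert 2 {0})))))))))) (insert {5,9,10} (insert {0,7,8} (insert {1,5,6} (insert {0,3,4} (insert {0,1,2} {})))))" by (rule TL_step) (simp_all add: V21_lit)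
  then have "TL V21 (insert 11 (insert 12 (insert 9 (insert 10 (insert 7 (insert 8 (insert 5 (insert 6 (insert 3 (insert 4 (insert 1 (insert 2 {0})))))))))))) (insert {5,11,12} (insert {5,9,10} (insert {0,7,8} (insert {1,5,6} (insert {0,3,4} (insert {0,1,2} {}))))))" by (rule TL_step) (simp_all add: V21_lit)
  then have "TL V21 (insert 13 (insert 14 (insert 11 (insert 12 (insert 9 (insert 10 (insert 7 (insert 8 (insert 5 (insert 6 (insert 3 (insert 4 (insert 1 (insert 2 {0})))))))))))))) (insert {0,13,14} (insert {5,11,12} (insert {5,9,10} (insert {0,7,8} (insert {1,5,6} (insert {0,3,4} (insert {0,1,2} {})))))))" by (rule TL_step) (simp_all add: V21_lit)
  then have "TL V21 (insert 16 (insert 15 (insert 13 (insert 14 (insert 11 (insert 12 (insert 9 (insert 10 (insert 7 (insert 8 (insert 5 (insert 6 (insert 3 (insert 4 (insert 1 (insert 2 {0})))))))))))))))) (insert {16,2,15} (insert {0,13,14} (insert {5,11,12} (insert {5,9,10} (insert {0,7,8} (insert {1,5,6} (insert {0,3,4} (insert {0,1,2} {}))))))))" by (rule TL_step2) (simp_all add: V21_lit)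
  then have "TL V21 (insert 17 (insert 18 (insert 16 (insert 15 (insert 13 (insert 14 (insert 11 (insert 12 (insert 9 (insert 10 (insert 7 (insert 8 (insert 5 (insert 6 (insert 3 (insert 4 (insert 1 (insert 2 {0})))))))))))))))))) (insert {1,17,18} (insert {16,2,15} (insert {0,13,14} (insert {5,11,12} (insert {5,9,10} (insert {0,7,8} (insert {1,5,6} (insert {0,3,4} (insert {0,1,2} {})))))))))" by (rule TL_step) (simp_all add: V21_lit)
  then have "TL V21 (insert 19 (insert 20 (insert 17 (insert 18 (insert 16 (insert 15 (insert 13 (insert 14 (insert 11 (insert 12 (insert 9 (insert 10 (insert 7 (insert 8 (insert 5 (insert 6 (insert 3 (insert 4 (insert 1 (insert 2 {0})))))))))))))))))))) (insert {19,20,15} (insert {1,17,18} (insert {16,2,15} (insert {0,13,14} (insert {5,11,12} (insert {5,9,10} (insert {0,7,8} (insert {1,5,6} (insert {0,3,4} (insert {0,1,2} {}))))))))))" by (rule TL_step3) (simp_all add: V21_lit)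
  moreover have "(insert 19 (insert 20 (insert 17 (insert 18 (insert 16 (insert 15 (insert 13 (insert 14 (insert 11 (insert 12 (insert 9 (insert 10 (insert 7 (insert 8 (insert 5 (insert 6 (insert 3 (insert 4 (insert 1 (insert 2 {0})))))))))))))))))))) = V21" unfolding V21_lit by auto
  moreover have "(insert {19,20,15} (insert {1,17,18} (insert {16,2,15} (insert {0,13,14} (insert {5,11,12} (insert {5,9,10} (insert {0,7,8} (insert {1,5,6} (insert {0,3,4} (insert {0,1,2} {})))))))))) = E3" unfolding E3_def by auto
  ultimately show ?thesis by simp
qed

lemma TL_E4: "TL V21 V21 E4"
proof -
  have "TL V21 {0} {}" by (rule TL_base) (simp add: V21_lit)
  then have "TL V21 (insert 1 (insert 2 {0})) (insert {0,1,2} {})" by (rule TL_step) (simp_all add: V21_lit)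
  then have "TL V21 (insert 3 (insert 4 (insert 1 (insert 2 {0})))) (insert {0,3,4} (insert {0,1,2} {}))" by (rule TL_step) (simp_all add: V21_lit)
  then have "TL V21 (insert 5 (insert 6 (insert 3 (insert 4 (insert 1 (insert 2 {0})))))) (insert {1,5,6} (insert {0,3,4} (insert {0,1,2} {})))" by (rule TL_step) (simp_all add: V21_lit)
  then have "TL V21 (insert 7 (insert 8 (insert 5 (insert 6 (insert 3 (insert 4 (insert 1 (insert 2 {0})))))))) (insert {0,7,8} (insert {1,5,6} (insert {0,3,4} (insert {0,1,2} {}))))" by (rule TL_step) (simp_all add: V21_lit)
  then have "TL V21 (insert 9 (insert 10 (insert 7 (insert 8 (insert 5 (insert 6 (insert 3 (insert 4 (insert 1 (insert 2 {0})))))))))) (insert {2,9,10} (insert {0,7,8} (insert {1,5,6} (insert {0,3,4} (insert {0,1,2} {})))))" by (rule TL_step) (simp_all add: V21_lit)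
  then have "TL V21 (insert 11 (insert 12 (insert 9 (insert 10 (insert 7 (insert 8 (insert 5 (insert 6 (insert 3 (insert 4 (insert 1 (insert 2 {0})))))))))))) (insert {1,11,12} (insert {2,9,10} (insert {0,7,8} (insert {1,5,6} (insert {0,3,4} (insert {0,1,2} {}))))))" by (rule TL_step) (simp_all add: V21_lit)
  then have "TL V21 (insert 13 (insert 14 (insert 11 (insert 12 (insert 9 (insert 10 (insert 7 (insert 8 (insert 5 (insert 6 (insert 3 (insert 4 (insert 1 (insert 2 {0})))))))))))))) (insert {0,13,14} (insert {1,11,12} (insert {2,9,10} (insert {0,7,8} (insert {1,5,6} (insert {0,3,4} (insert {0,1,2} {})))))))" by (rule TL_step) (simp_all add: V21_lit)
  then have "TL V21 (insert 16 (insert 15 (insert 13 (insert 14 (insert 11 (insert 12 (insert 9 (insert 10 (insert 7 (insert 8 (insert 5 (insert 6 (insert 3 (insert 4 (insert 1 (insert 2 {0})))))))))))))))) (insert {16,9,15} (insert {0,13,14} (insert {1,11,12} (insert {2,9,10} (insert {0,7,8} (insert {1,5,6} (insert {0,3,4} (insert {0,1,2} {}))))))))" by (rule TL_step2) (simp_all add: V21_lit)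
  then have "TL V21 (insert 17 (insert 18 (insert 16 (insert 15 (insert 13 (insert 14 (insert 11 (insert 12 (insert 9 (insert 10 (insert 7 (insert 8 (insert 5 (insert 6 (insert 3 (insert 4 (insert 1 (insert 2 {0})))))))))))))))))) (insert {17,18,9} (insert {16,9,15} (insert {0,13,14} (insert {1,11,12} (insert {2,9,10} (insert {0,7,8} (insert {1,5,6} (insert {0,3,4} (insert {0,1,2} {})))))))))" by (rule TL_step3) (simp_all add: V21_lit)
  then have "TL V21 (insert 19 (insert 20 (insert 17 (insert 18 (insert 16 (insert 15 (insert 13 (insert 14 (insert 11 (insert 12 (insert 9 (insert 10 (insert 7 (insert 8 (insert 5 (insert 6 (insert 3 (insert 4 (insert 1 (insert 2 {0})))))))))))))))))))) (insert {3,19,20} (insert {17,18,9} (insert {16,9,15} (insert {0,13,14} (insert {1,11,12} (insert {2,9,10} (insert {0,7,8} (insert {1,5,6} (insert {0,3,4} (insert {0,1,2} {}))))))))))" by (rule TL_step) (simp_all add: V21_lit)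
  moreover have "(insert 19 (insert 20 (insert 17 (insert 18 (insert 16 (insert 15 (insert 13 (insert 14 (insert 11 (insert 12 (insert 9 (insert 10 (insert 7 (insert 8 (insert 5 (insert 6 (insert 3 (insert 4 (insert 1 (insert 2 {0})))))))))))))))))))) = V21" unfolding V21_lit by auto
  moreover have "(insert {3,19,20} (insert {17,18,9} (insert {16,9,15} (insert {0,13,14} (insert {1,11,12} (insert {2,9,10} (insert {0,7,8} (insert {1,5,6} (insert {0,3,4} (insert {0,1,2} {})))))))))) = E4" unfolding E4_def by auto
  ultimately show ?thesis by simp
qed

definition CC :: "'a set \<Rightarrow> 'a set set \<Rightarrow> 'a set \<Rightarrow> (nat \<Rightarrow> nat) \<Rightarrow> ('a \<Rightarrow> nat) set" where
  "CC V E S \<alpha> = {f \<in> proper_colorings V E. (\<exists>c. \<forall>v\<in>S. f v = c) \<and> (\<forall>i. card {v \<in> V. f v = i} = \<alpha> i)}"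

lemma CC_finite: assumes fV: "finite V" shows "finite (CC V E S \<alpha>)"
proof (cases "CC V E S \<alpha> = {}")
  case True thus ?thesis by simp
next
  case False
  then obtain f0 where f0: "f0 \<in> CC V E S \<alpha>" by blast
  have "CC V E S \<alpha> \<subseteq> PiE V (\<lambda>_. f0 ` V)"
  proof
    fix f assume f: "f \<in> CC V E S \<alpha>"
    have ext: "f \<in> extensional V" using f unfolding CC_def proper_colorings_def by (auto simp: PiE_def)
    have "\<And>v. v \<in> V \<Longrightarrow> f v \<in> f0 ` V"
    proof -
      fix v assume v: "v \<in> V"
      have "v \<in> {w \<in> V. f w = f v}" using v by simp
      moreover have "finite {w \<in> V. f w = f v}" using fV by simp
      ultimately have "card {w \<in> V. f w = f v} \<noteq> 0" by (simp add: card_eq_0_iff) blast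
      hence "\<alpha> (f v) \<noteq> 0" using f unfolding CC_def by simp
      hence "card {w \<in> V. f0 w = f v} \<noteq> 0" using f0 unfolding CC_def by simp
      hence "{w \<in> V. f0 w = f v} \<noteq> {}" by (intro notI) simp
      then obtain w where "w \<in> V" "f0 w = f v" by blast
      thus "f v \<in> f0 ` V" by (metis image_eqI)
    qed
    thus "f \<in> PiE V (\<lambda>_. f0 ` V)" using ext by (auto simp: PiE_def Pi_def)
  qed
  moreover have "finite (PiE V (\<lambda>_. f0 ` V))" using fV by (intro finite_PiE) auto
  ultimately show ?thesis by (rule finite_subset)
qed

lemma chrom_CC: "chrom_symfun V E \<alpha> = card (CC V E {} \<alpha>)"
  unfolding chrom_symfun_def CC_def by simp

lemma CC_insert: "CC V (insert e E) {} \<alpha> = CC V E {} \<alpha> - CC V E e \<alpha>"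
  unfolding CC_def proper_colorings_def by (rule set_eqI) (simp, blast)

lemma CC_sub: "CC V E e \<alpha> \<subseteq> CC V E {} \<alpha>"
  unfolding CC_def by auto

lemma chrom_split: "finite V \<Longrightarrow> chrom_symfun V (insert e E) \<alpha> = card (CC V E {} \<alpha>) - card (CC V E e \<alpha>)"
  unfolding chrom_CC CC_insert by (simp add: card_Diff_subset CC_sub CC_finite)

lemma transfer_le:
  assumes fV: "finite V" and SV: "S \<subseteq> V" and im: "\<tau> ` (V - S) = V - S" and imS: "\<tau> ` S \<subseteq> S"
    and EV: "\<forall>e\<in>E. e \<subseteq> V"
    and EE: "\<forall>e\<in>E. \<exists>e'\<in>E'. \<tau> ` (e - S) = e' - S \<and> (e \<inter> S = {} \<longleftrightarrow> e' \<inter> S = {})"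
  shows "card (CC V E' S \<alpha>) \<le> card (CC V E S \<alpha>)"
proof -
  have inj: "inj_on \<tau> (V - S)" using fV im by (intro eq_card_imp_inj_on) auto
  have tV: "\<And>v. v \<in> V \<Longrightarrow> \<tau> v \<in> V" using im imS SV by blast
  define \<phi> where "\<phi> f = restrict (f \<circ> \<tau>) V" for f :: "'a \<Rightarrow> nat"
  have map: "\<phi> f \<in> CC V E S \<alpha>" if f: "f \<in> CC V E' S \<alpha>" for f
  proof -
    obtain c where c: "\<forall>v\<in>S. f v = c" using f unfolding CC_def by blast
    have fP: "f \<in> V \<rightarrow>\<^sub>E {1..}" and fE: "\<forall>e\<in>E'. \<not> (\<exists>d. \<forall>v\<in>e. f v = d)"
      and fA: "\<forall>i. card {v \<in> V. f v = i} = \<alpha> i"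
      using f unfolding CC_def proper_colorings_def by auto
    have g1: "\<phi> f \<in> V \<rightarrow>\<^sub>E {1..}"
      unfolding \<phi>_def using fP tV by (simp add: restrict_PiE_iff PiE_iff)
    have g2: "\<forall>e\<in>E. \<not> (\<exists>d. \<forall>v\<in>e. \<phi> f v = d)"
    proof (intro ballI notI)
      fix e assume e: "e \<in> E" and "\<exists>d. \<forall>v\<in>e. \<phi> f v = d"
      then obtain d where d0: "\<forall>v\<in>e. \<phi> f v = d" by blast
      have d: "\<forall>v\<in>e. f (\<tau> v) = d"
      proof
        fix v assume v: "v \<in> e"
        hence "v \<in> V" using EV e by blast
        moreover have "\<phi> f v = d" using d0 v by blast
        ultimately show "f (\<tau> v) = d" unfolding \<phi>_def by simp
      qed
      from bspec[OF EE e] obtain e' where e'1: "e' \<in> E'"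
        and e'23: "\<tau> ` (e - S) = e' - S \<and> (e \<inter> S = {} \<longleftrightarrow> e' \<inter> S = {})" ..
      have e'2: "\<tau> ` (e - S) = e' - S" and e'3: "e \<inter> S = {} \<longleftrightarrow> e' \<inter> S = {}"
        using e'23 by simp_all
      have "\<forall>w\<in>e'. f w = d"
      proof
        fix w assume w: "w \<in> e'"
        show "f w = d"
        proof (cases "w \<in> S")
          case True
          hence "e' \<inter> S \<noteq> {}" using w by blast
          hence "e \<inter> S \<noteq> {}" using e'3 by simp
          then obtain s where s: "s \<in> e" "s \<in> S" by blast
          have "\<tau> s \<in> S" using imS s(2) by blast
          hence "f (\<tau> s) = c" using c by simp
          moreover have "f w = c" using c True by simp
          moreover have "f (\<tau> s) = d" using d s(1) by simp
          ultimately show ?thesis by simp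
        next
          case False
          hence "w \<in> e' - S" using w by simp
          hence "w \<in> \<tau> ` (e - S)" using e'2 by simp
          then obtain u where "u \<in> e" "w = \<tau> u" by blast
          thus ?thesis using d by simp
        qed
      qed
      thus False using fE e'1 by blast
    qed
    have g3: "\<forall>i. card {v \<in> V. \<phi> f v = i} = \<alpha> i"
    proof
      fix i
      have sp: "\<And>P. {v \<in> V. P v} = {v \<in> S. P v} \<union> {v \<in> V - S. P v}" using SV by blast
      have A: "{v \<in> S. \<phi> f v = i} = {v \<in> S. f v = i}" using c imS SV unfolding \<phi>_def by auto
      have B: "\<tau> ` {v \<in> V - S. \<phi> f v = i} = {v \<in> V - S. f v = i}"
      proof -
        have "\<tau> ` {v \<in> V - S. \<phi> f v = i} = \<tau> ` {v \<in> V - S. f (\<tau> v) = i}" unfolding \<phi>_def by auto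
        also have "\<dots> = {w \<in> \<tau> ` (V - S). f w = i}" by auto
        finally show ?thesis using im by simp
      qed
      have B': "card {v \<in> V - S. \<phi> f v = i} = card {v \<in> V - S. f v = i}"
      proof -
        have "inj_on \<tau> {v \<in> V - S. \<phi> f v = i}" using inj by (rule inj_on_subset) auto
        hence "card (\<tau> ` {v \<in> V - S. \<phi> f v = i}) = card {v \<in> V - S. \<phi> f v = i}" by (rule card_image)
        thus ?thesis using B by simp
      qed
      have fS: "finite S" using finite_subset[OF SV fV] .
      have fin: "\<And>P. finite {v \<in> S. P v}" "\<And>P. finite {v \<in> V - S. P v}" using fS fV by simp_all
      have fin3: "\<And>P. finite {v \<in> V. P v}" using fV by simp
      have "card {v \<in> V. \<phi> f v = i} = card {v \<in> S. \<phi> f v = i} + card {v \<in> V - S. \<phi> f v = i}"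
        by (subst sp, rule card_Un_disjoint) (auto simp: fin fin3)
      also have "\<dots> = card {v \<in> S. f v = i} + card {v \<in> V - S. f v = i}" using A B' by simp
      also have "\<dots> = card {v \<in> V. f v = i}"
        by (subst sp[of "\<lambda>v. f v = i"], rule card_Un_disjoint[symmetric]) (auto simp: fin fin3)
      finally show "card {v \<in> V. \<phi> f v = i} = \<alpha> i" using fA by simp
    qed
    have g4: "\<exists>c. \<forall>v\<in>S. \<phi> f v = c" using c imS SV unfolding \<phi>_def by auto
    show ?thesis using g1 g2 g3 g4 unfolding CC_def proper_colorings_def by auto
  qed
  have injphi: "inj_on \<phi> (CC V E' S \<alpha>)"
  proof
    fix f g assume f: "f \<in> CC V E' S \<alpha>" and g: "g \<in> CC V E' S \<alpha>" and eq: "\<phi> f = \<phi> g"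
    obtain cf where cf: "\<forall>v\<in>S. f v = cf" using f unfolding CC_def by blast
    obtain cg where cg: "\<forall>v\<in>S. g v = cg" using g unfolding CC_def by blast
    have fe: "f \<in> extensional V" "g \<in> extensional V" using f g unfolding CC_def proper_colorings_def by (auto simp: PiE_def)
    have eqV: "\<And>v. v \<in> V \<Longrightarrow> f (\<tau> v) = g (\<tau> v)" using eq unfolding \<phi>_def by (metis comp_apply restrict_apply')
    show "f = g"
    proof (rule extensionalityI[OF fe])
      fix w assume w: "w \<in> V"
      show "f w = g w"
      proof (cases "w \<in> S")
        case False
        hence "w \<in> \<tau> ` (V - S)" using im w by blast
        thus ?thesis using eqV by auto
      next
        case True
        hence "\<tau> w \<in> S" using imS by blast
        hence "f (\<tau> w) = cf" "g (\<tau> w) = cg" using cf cg by auto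
        moreover have "f w = cf" "g w = cg" using cf cg True by auto
        ultimately show ?thesis using eqV w by metis
      qed
    qed
  qed
  show ?thesis
    by (rule card_inj_on_le[OF injphi]) (use map CC_finite[OF fV] in auto)
qed



lemma transfer_le':
  assumes fV: "finite V" and SV: "S \<subseteq> V" and im1: "\<tau> ` (V - S) \<subseteq> V - S" and im2: "V - S \<subseteq> \<tau> ` (V - S)"
    and imS: "\<tau> ` S \<subseteq> S" and EV: "\<forall>e\<in>E. e \<subseteq> V"
    and EE: "\<forall>e\<in>E. \<exists>e'\<in>E'. \<tau> ` (e - S) \<subseteq> e' - S \<and> e' - S \<subseteq> \<tau> ` (e - S) \<and> ((\<exists>x\<in>e. x \<in> S) \<longleftrightarrow> (\<exists>x\<in>e'. x \<in> S))"
  shows "card (CC V E' S \<alpha>) \<le> card (CC V E S \<alpha>)"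
proof (rule transfer_le[OF fV SV equalityI[OF im1 im2] imS EV])
  show "\<forall>e\<in>E. \<exists>e'\<in>E'. \<tau> ` (e - S) = e' - S \<and> (e \<inter> S = {} \<longleftrightarrow> e' \<inter> S = {})"
  proof
    fix e assume e: "e \<in> E"
    from bspec[OF EE e] obtain e' where e'1: "e' \<in> E'" and
      h: "\<tau> ` (e - S) \<subseteq> e' - S \<and> e' - S \<subseteq> \<tau> ` (e - S) \<and> ((\<exists>x\<in>e. x \<in> S) \<longleftrightarrow> (\<exists>x\<in>e'. x \<in> S))" ..
    have "\<tau> ` (e - S) = e' - S" using h by (intro equalityI) simp_all
    moreover have "(e \<inter> S = {}) \<longleftrightarrow> (e' \<inter> S = {})" using h by blast
    ultimately show "\<exists>e'\<in>E'. \<tau> ` (e - S) = e' - S \<and> (e \<inter> S = {} \<longleftrightarrow> e' \<inter> S = {})" using e'1 by blast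
  qed
qed

definition t_a12 :: "nat \<Rightarrow> nat" where "t_a12 v = [3, 9, 17, 15, 16, 2, 10, 0, 4, 5, 18, 13, 14, 1, 6, 19, 20, 7, 8, 11, 12] ! v"
definition t_a12i :: "nat \<Rightarrow> nat" where "t_a12i v = [7, 13, 5, 0, 8, 9, 14, 17, 18, 1, 6, 19, 20, 11, 12, 3, 4, 2, 10, 15, 16] ! v"
definition t_m12 :: "nat \<Rightarrow> nat" where "t_m12 v = [0, 1, 2, 5, 6, 7, 8, 9, 10, 3, 4, 11, 12, 15, 16, 17, 18, 13, 14, 19, 20] ! v"
definition t_m12i :: "nat \<Rightarrow> nat" where "t_m12i v = [0, 1, 2, 9, 10, 3, 4, 5, 6, 7, 8, 11, 12, 17, 18, 13, 14, 15, 16, 19, 20] ! v"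
definition t_a34 :: "nat \<Rightarrow> nat" where "t_a34 v = [9, 3, 5, 2, 10, 0, 4, 15, 16, 7, 8, 13, 14, 17, 18, 1, 6, 19, 20, 11, 12] ! v"
definition t_a34i :: "nat \<Rightarrow> nat" where "t_a34i v = [5, 15, 3, 1, 6, 2, 16, 9, 10, 0, 4, 19, 20, 11, 12, 7, 8, 13, 14, 17, 18] ! v"
definition t_m34 :: "nat \<Rightarrow> nat" where "t_m34 v = [0, 1, 2, 7, 8, 9, 10, 13, 14, 15, 16, 17, 18, 5, 6, 3, 4, 11, 12, 19, 20] ! v"
definition t_m34i :: "nat \<Rightarrow> nat" where "t_m34i v = [0, 1, 2, 15, 16, 13, 14, 3, 4, 5, 6, 17, 18, 7, 8, 9, 10, 11, 12, 19, 20] ! v"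
definition F1 :: "nat set set" where "F1 = {{0,3,4},{1,5,6},{0,7,8},{2,9,10},{1,11,12},{9,13,14},{16,3,15},{17,18,7},{19,20,13}}"
lemma E1_split: "E1 = insert {0,1,2} F1" unfolding E1_def F1_def by (rule refl)
definition F2 :: "nat set set" where "F2 = {{0,3,4},{1,5,6},{0,7,8},{2,9,10},{1,11,12},{9,13,14},{16,3,15},{17,18,5},{19,20,15}}"
lemma E2_split: "E2 = insert {0,1,2} F2" unfolding E2_def F2_def by (rule refl)
definition F3 :: "nat set set" where "F3 = {{0,3,4},{1,5,6},{0,7,8},{5,9,10},{5,11,12},{0,13,14},{16,2,15},{1,17,18},{19,20,15}}"
lemma E3_split: "E3 = insert {0,1,2} F3" unfolding E3_def F3_def by (rule refl)
definition F4 :: "nat set set" where "F4 = {{0,3,4},{1,5,6},{0,7,8},{2,9,10},{1,11,12},{0,13,14},{16,9,15},{17,18,9},{3,19,20}}"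
lemma E4_split: "E4 = insert {0,1,2} F4" unfolding E4_def F4_def by (rule refl)
lemma c12a: "card (CC V21 F2 {} \<alpha>) \<le> card (CC V21 F1 {} \<alpha>)"
  by (rule transfer_le'[where \<tau>=t_a12]) (unfold V21_lit F1_def F2_def, simp_all add: t_a12_def insert_Diff_if)
lemma c12b: "card (CC V21 F1 {} \<alpha>) \<le> card (CC V21 F2 {} \<alpha>)"
  by (rule transfer_le'[where \<tau>=t_a12i]) (unfold V21_lit F2_def F1_def, simp_all add: t_a12i_def insert_Diff_if)
lemma c12c: "card (CC V21 F2 {0,1,2} \<alpha>) \<le> card (CC V21 F1 {0,1,2} \<alpha>)"
  by (rule transfer_le'[where \<tau>=t_m12]) (unfold V21_lit F1_def F2_def, simp_all add: t_m12_def insert_Diff_if)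
lemma c12d: "card (CC V21 F1 {0,1,2} \<alpha>) \<le> card (CC V21 F2 {0,1,2} \<alpha>)"
  by (rule transfer_le'[where \<tau>=t_m12i]) (unfold V21_lit F2_def F1_def, simp_all add: t_m12i_def insert_Diff_if)
lemma c34a: "card (CC V21 F4 {} \<alpha>) \<le> card (CC V21 F3 {} \<alpha>)"
  by (rule transfer_le'[where \<tau>=t_a34]) (unfold V21_lit F3_def F4_def, simp_all add: t_a34_def insert_Diff_if)
lemma c34b: "card (CC V21 F3 {} \<alpha>) \<le> card (CC V21 F4 {} \<alpha>)"
  by (rule transfer_le'[where \<tau>=t_a34i]) (unfold V21_lit F4_def F3_def, simp_all add: t_a34i_def insert_Diff_if)
lemma c34c: "card (CC V21 F4 {0,1,2} \<alpha>) \<le> card (CC V21 F3 {0,1,2} \<alpha>)"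
  by (rule transfer_le'[where \<tau>=t_m34]) (unfold V21_lit F3_def F4_def, simp_all add: t_m34_def insert_Diff_if)
lemma c34d: "card (CC V21 F3 {0,1,2} \<alpha>) \<le> card (CC V21 F4 {0,1,2} \<alpha>)"
  by (rule transfer_le'[where \<tau>=t_m34i]) (unfold V21_lit F4_def F3_def, simp_all add: t_m34i_def insert_Diff_if)
lemma fV21: "finite V21" unfolding V21_def by simp
lemma chrom12: "chrom_symfun V21 E1 = chrom_symfun V21 E2"
proof
  fix \<alpha> show "chrom_symfun V21 E1 \<alpha> = chrom_symfun V21 E2 \<alpha>"
    unfolding E1_split E2_split chrom_split[OF fV21] using c12a c12b c12c c12d
    by (metis le_antisym)
qed
lemma chrom34: "chrom_symfun V21 E3 = chrom_symfun V21 E4"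
proof
  fix \<alpha> show "chrom_symfun V21 E3 \<alpha> = chrom_symfun V21 E4 \<alpha>"
    unfolding E3_split E4_split chrom_split[OF fV21] using c34a c34b c34c c34d
    by (metis le_antisym)
qed




definition lf :: "'a set set \<Rightarrow> 'a set \<Rightarrow> 'a \<Rightarrow> bool" where
  "lf E e v = (\<forall>w\<in>e. w \<noteq> v \<longrightarrow> (\<forall>e'\<in>E. w \<in> e' \<longrightarrow> e' \<subseteq> e))"
definition Phi2 :: "'a set set \<Rightarrow> bool" where
  "Phi2 E = (\<exists>e1\<in>E. \<exists>v\<in>e1. lf E e1 v \<and> (\<exists>e2\<in>E. v \<in> e2 \<and> \<not> e2 \<subseteq> e1 \<and> lf E e2 v))"
definition Phi3 :: "'a set set \<Rightarrow> bool" where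
  "Phi3 E = (\<exists>e1\<in>E. \<exists>v\<in>e1. lf E e1 v \<and> (\<exists>e2\<in>E. v \<in> e2 \<and> \<not> e2 \<subseteq> e1 \<and> lf E e2 v \<and>
     (\<exists>e3\<in>E. v \<in> e3 \<and> \<not> e3 \<subseteq> e1 \<and> \<not> e3 \<subseteq> e2 \<and> lf E e3 v)))"

lemma lf_transfer:
  assumes b: "bij_betw \<sigma> V V'" and bE: "bij_betw (\<lambda>e. \<sigma> ` e) E E'" and EV: "\<forall>e\<in>E. e \<subseteq> V"
    and e: "e \<in> E" and v: "v \<in> e" and l: "lf E e v"
  shows "lf E' (\<sigma> ` e) (\<sigma> v)"
  unfolding lf_def
proof (intro ballI impI)
  fix w' e' assume w': "w' \<in> \<sigma> ` e" "w' \<noteq> \<sigma> v" and e': "e' \<in> E'" "w' \<in> e'"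
  obtain w where w: "w \<in> e" "w' = \<sigma> w" using w'(1) by (rule imageE) simp
  have wv: "w \<noteq> v" using w w'(2) by auto
  have surj: "(\<lambda>e. \<sigma> ` e) ` E = E'" using bE by (rule bij_betw_imp_surj_on)
  obtain e'' where e'': "e'' \<in> E" "e' = \<sigma> ` e''" using e'(1) surj[symmetric] by (auto simp del: image_image)
  have inj: "inj_on \<sigma> V" using b by (rule bij_betw_imp_inj_on)
  have "w \<in> e''"
  proof -
    have "\<sigma> w \<in> \<sigma> ` e''" using e'' e'(2) w(2) by simp
    then obtain u where u: "u \<in> e''" "\<sigma> w = \<sigma> u" by (rule imageE)
    have "u \<in> V" using bspec[OF EV e''(1)] u(1) by blast
    moreover have "w \<in> V" using bspec[OF EV e] w(1) by blast
    ultimately have "w = u" using inj_onD[OF inj u(2)] by simp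
    thus ?thesis using u(1) by simp
  qed
  have "\<forall>e'\<in>E. w \<in> e' \<longrightarrow> e' \<subseteq> e" using l w(1) wv unfolding lf_def by simp
  hence "e'' \<subseteq> e" using e''(1) \<open>w \<in> e''\<close> by simp
  thus "e' \<subseteq> \<sigma> ` e" using e'' by auto
qed

lemma iso_facts:
  assumes iso: "hyp_isomorphic V E V' E'"
  obtains \<sigma> where "bij_betw \<sigma> V V'" "bij_betw (\<lambda>e. \<sigma> ` e) E E'"
proof -
  from iso obtain \<sigma> where h: "bij_betw \<sigma> V V' \<and> bij_betw (\<lambda>e. \<sigma> ` e) E E'"
    unfolding hyp_isomorphic_def ..
  show ?thesis by (rule that[OF conjunct1[OF h] conjunct2[OF h]])
qed

lemma img_mem: assumes "bij_betw (\<lambda>e. \<sigma> ` e) E E'" "e \<in> E" shows "\<sigma> ` e \<in> E'"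
proof -
  have "\<forall>a\<in>E. \<sigma> ` a \<in> E'" using bij_betwE[OF assms(1)] .
  thus ?thesis using assms(2) by simp
qed

lemma img_nsub: assumes "bij_betw \<sigma> V V'" "e1 \<subseteq> V" "e2 \<subseteq> V" "\<not> e2 \<subseteq> e1" shows "\<not> \<sigma> ` e2 \<subseteq> \<sigma> ` e1"
proof
  assume sub: "\<sigma> ` e2 \<subseteq> \<sigma> ` e1"
  have inj: "inj_on \<sigma> V" using assms(1) by (rule bij_betw_imp_inj_on)
  have "e2 \<subseteq> e1"
  proof
    fix x assume x: "x \<in> e2"
    hence "\<sigma> x \<in> \<sigma> ` e1" using sub by blast
    then obtain y where y: "y \<in> e1" "\<sigma> x = \<sigma> y" by (rule imageE)
    have "x \<in> V" "y \<in> V" using x y assms(2,3) by blast+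
    hence "x = y" using inj_onD[OF inj y(2)] by simp
    thus "x \<in> e1" using y(1) by simp
  qed
  thus False using assms(4) by simp
qed

lemma Phi2_transfer:
  assumes iso: "hyp_isomorphic V E V' E'" and EV: "\<forall>e\<in>E. e \<subseteq> V" and P: "Phi2 E"
  shows "Phi2 E'"
proof -
  obtain \<sigma> where b: "bij_betw \<sigma> V V'" and bE: "bij_betw (\<lambda>e. \<sigma> ` e) E E'"
    using iso by (rule iso_facts)
  from P obtain e1 where e1: "e1 \<in> E" and "\<exists>v\<in>e1. lf E e1 v \<and> (\<exists>e2\<in>E. v \<in> e2 \<and> \<not> e2 \<subseteq> e1 \<and> lf E e2 v)"
    unfolding Phi2_def ..
  then obtain v where v: "v \<in> e1" and l1: "lf E e1 v" and "\<exists>e2\<in>E. v \<in> e2 \<and> \<not> e2 \<subseteq> e1 \<and> lf E e2 v" by blast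
  then obtain e2 where e2: "e2 \<in> E" and v2: "v \<in> e2" and ne: "\<not> e2 \<subseteq> e1" and l2: "lf E e2 v" by blast
  have L1: "lf E' (\<sigma> ` e1) (\<sigma> v)" using lf_transfer[OF b bE EV e1 v l1] .
  have L2: "lf E' (\<sigma> ` e2) (\<sigma> v)" using lf_transfer[OF b bE EV e2 v2 l2] .
  have M1: "\<sigma> ` e1 \<in> E'" using img_mem[OF bE e1] .
  have M2: "\<sigma> ` e2 \<in> E'" using img_mem[OF bE e2] .
  have N: "\<not> \<sigma> ` e2 \<subseteq> \<sigma> ` e1" using img_nsub[OF b bspec[OF EV e1] bspec[OF EV e2] ne] .
  have V1: "\<sigma> v \<in> \<sigma> ` e1" "\<sigma> v \<in> \<sigma> ` e2" using v v2 by simp_all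
  show ?thesis unfolding Phi2_def
    by (rule bexI[OF _ M1], rule bexI[OF _ V1(1)], rule conjI[OF L1], rule bexI[OF _ M2]) (intro conjI V1 N L2)
qed

lemma Phi3_transfer:
  assumes iso: "hyp_isomorphic V E V' E'" and EV: "\<forall>e\<in>E. e \<subseteq> V" and P: "Phi3 E"
  shows "Phi3 E'"
proof -
  obtain \<sigma> where b: "bij_betw \<sigma> V V'" and bE: "bij_betw (\<lambda>e. \<sigma> ` e) E E'"
    using iso by (rule iso_facts)
  from P obtain e1 where e1: "e1 \<in> E" and "\<exists>v\<in>e1. lf E e1 v \<and> (\<exists>e2\<in>E. v \<in> e2 \<and> \<not> e2 \<subseteq> e1 \<and> lf E e2 v \<and>
     (\<exists>e3\<in>E. v \<in> e3 \<and> \<not> e3 \<subseteq> e1 \<and> \<not> e3 \<subseteq> e2 \<and> lf E e3 v))"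
    unfolding Phi3_def ..
  then obtain v where v: "v \<in> e1" and l1: "lf E e1 v" and "\<exists>e2\<in>E. v \<in> e2 \<and> \<not> e2 \<subseteq> e1 \<and> lf E e2 v \<and>
     (\<exists>e3\<in>E. v \<in> e3 \<and> \<not> e3 \<subseteq> e1 \<and> \<not> e3 \<subseteq> e2 \<and> lf E e3 v)" by blast
  then obtain e2 where e2: "e2 \<in> E" and v2: "v \<in> e2" and ne: "\<not> e2 \<subseteq> e1" and l2: "lf E e2 v"
    and "\<exists>e3\<in>E. v \<in> e3 \<and> \<not> e3 \<subseteq> e1 \<and> \<not> e3 \<subseteq> e2 \<and> lf E e3 v" by blast
  then obtain e3 where e3: "e3 \<in> E" and v3: "v \<in> e3" and ne31: "\<not> e3 \<subseteq> e1" and ne32: "\<not> e3 \<subseteq> e2" and l3: "lf E e3 v" by blast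
  have L1: "lf E' (\<sigma> ` e1) (\<sigma> v)" using lf_transfer[OF b bE EV e1 v l1] .
  have L2: "lf E' (\<sigma> ` e2) (\<sigma> v)" using lf_transfer[OF b bE EV e2 v2 l2] .
  have L3: "lf E' (\<sigma> ` e3) (\<sigma> v)" using lf_transfer[OF b bE EV e3 v3 l3] .
  have M1: "\<sigma> ` e1 \<in> E'" using img_mem[OF bE e1] .
  have M2: "\<sigma> ` e2 \<in> E'" using img_mem[OF bE e2] .
  have M3: "\<sigma> ` e3 \<in> E'" using img_mem[OF bE e3] .
  have N: "\<not> \<sigma> ` e2 \<subseteq> \<sigma> ` e1" "\<not> \<sigma> ` e3 \<subseteq> \<sigma> ` e1" "\<not> \<sigma> ` e3 \<subseteq> \<sigma> ` e2"
    using img_nsub[OF b bspec[OF EV e1] bspec[OF EV e2] ne] img_nsub[OF b bspec[OF EV e1] bspec[OF EV e3] ne31]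
      img_nsub[OF b bspec[OF EV e2] bspec[OF EV e3] ne32] by simp_all
  have V1: "\<sigma> v \<in> \<sigma> ` e1" "\<sigma> v \<in> \<sigma> ` e2" "\<sigma> v \<in> \<sigma> ` e3" using v v2 v3 by simp_all
  show ?thesis unfolding Phi3_def
    by (rule bexI[OF _ M1], rule bexI[OF _ V1(1)], rule conjI[OF L1], rule bexI[OF _ M2],
        intro conjI V1 N L2, rule bexI[OF _ M3]) (intro conjI V1 N L3)
qed

lemma P1: "Phi2 E1" unfolding Phi2_def lf_def E1_def by simp
lemma P2: "\<not> Phi2 E2" unfolding Phi2_def lf_def E2_def by simp
lemma P3: "Phi3 E3" unfolding Phi3_def lf_def E3_def by simp
lemma P4: "\<not> Phi3 E4" unfolding Phi3_def lf_def E4_def by simp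
lemma EV1: "\<forall>e\<in>E1. e \<subseteq> V21" unfolding E1_def V21_lit by simp
lemma EV3: "\<forall>e\<in>E3. e \<subseteq> V21" unfolding E3_def V21_lit by simp

lemma noniso12: "\<not> hyp_isomorphic V21 E1 V21 E2" using Phi2_transfer[OF _ EV1 P1] P2 by blast
lemma noniso34: "\<not> hyp_isomorphic V21 E3 V21 E4" using Phi3_transfer[OF _ EV3 P3] P4 by blast

lemma u3: "uniform3 E1" "uniform3 E2" "uniform3 E3" "uniform3 E4"
  unfolding uniform3_def E1_def E2_def E3_def E4_def by simp_all



theorem mainTheorem14:
  shows "(hypertree V21 E1 \<and> uniform3 E1) \<and> (hypertree V21 E2 \<and> uniform3 E2) \<and>
         (hypertree V21 E3 \<and> uniform3 E3) \<and> (hypertree V21 E4 \<and> uniform3 E4) \<and>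
         \<not> hyp_isomorphic V21 E1 V21 E2 \<and> \<not> hyp_isomorphic V21 E3 V21 E4 \<and>
         chrom_symfun V21 E1 = chrom_symfun V21 E2 \<and> chrom_symfun V21 E3 = chrom_symfun V21 E4"
  using TL_hypertree[OF TL_E1] TL_hypertree[OF TL_E2] TL_hypertree[OF TL_E3] TL_hypertree[OF TL_E4]
    u3 noniso12 noniso34 chrom12 chrom34
  by (simp only: simp_thms)

end
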